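(* Let $G$ be a vigorous subgroup of $\operatorname{Homeo}(\mathfrak{C})$ and let $U\in K_{\mathfrak{C}}$. Then the set $$X_{G,U}:=\{\gamma\in G: \text{there is a proper clopen subset } V \text{ of } U \text{ with } \operatorname{supp}(\gamma)\subseteq V\}$$ generates $\operatorname{pstab}_G(\mathfrak{C}\setminus U)$.
   Context: $\mathfrak{C}$ denotes a Cantor space (a space homeomorphic to $\{0,1\}^\omega$). Groups of homeomorphisms act on the right, and products are composed left to right. $K_{\mathfrak{C}}$ denotes the set of non-empty proper clopen subsets of $\mathfrak{C}$. For $\gamma\in\operatorname{Homeo}(\mathfrak{C})$, $\operatorname{supp}(\gamma)=\{p\in\mathfrak{C}: p\gamma\neq p\}$. For $G\le\operatorname{Homeo}(\mathfrak{C})$ and $A\subseteq\mathfrak{C}$, $\operatorname{pstab}_G(A)=\{g\in G: pg=p \text{ for all } p\in A\}$. A subset $S\subseteq \operatorname{Homeo}(\mathfrak{C})$ is vigorous if for all clopen $A,B,C\subseteq\mathfrak{C}$ with $B,C$ non-empty proper subsets of $A$ there is $\gamma\in S$ with $\operatorname{supp}(\gamma)\subseteq A$ and $B\gamma\subseteq C$. *)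

theory Defs
  imports "HOL-Analysis.Analysis" "HOL-Algebra.Generated_Groups"
begin

definition cantor_space :: "'a topology \<Rightarrow> bool" where
  "cantor_space X \<longleftrightarrow>
     X homeomorphic_space (product_topology (\<lambda>_::nat. discrete_topology (UNIV::bool set)) UNIV)"

definition clopenin :: "'a topology \<Rightarrow> 'a set \<Rightarrow> bool" where
  "clopenin X A \<longleftrightarrow> openin X A \<and> closedin X A"

definition K_sets :: "'a topology \<Rightarrow> 'a set set" where
  "K_sets X = {A. clopenin X A \<and> A \<noteq> {} \<and> A \<subset> topspace X}"

definition Homeo :: "'a topology \<Rightarrow> ('a \<Rightarrow> 'a) set" where
  "Homeo X = {g. homeomorphic_map X X g \<and> (\<forall>x. x \<notin> topspace X \<longrightarrow> g x = x)}"

text \<open>The group Homeo(X); right action, products composed left to right: g*h = h o g.\<close>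
definition homeo_group :: "'a topology \<Rightarrow> ('a \<Rightarrow> 'a) monoid" where
  "homeo_group X = \<lparr>carrier = Homeo X, mult = (\<lambda>g h. h \<circ> g), one = id\<rparr>"

definition supp :: "'a topology \<Rightarrow> ('a \<Rightarrow> 'a) \<Rightarrow> 'a set" where
  "supp X g = {p \<in> topspace X. g p \<noteq> p}"

definition pstab :: "'a topology \<Rightarrow> ('a \<Rightarrow> 'a) set \<Rightarrow> 'a set \<Rightarrow> ('a \<Rightarrow> 'a) set" where
  "pstab X G A = {g \<in> G. \<forall>p \<in> A. g p = p}"

definition vigorous :: "'a topology \<Rightarrow> ('a \<Rightarrow> 'a) set \<Rightarrow> bool" where
  "vigorous X S \<longleftrightarrow>
     (\<forall>A B C. clopenin X A \<and> clopenin X B \<and> clopenin X C \<and>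
        B \<noteq> {} \<and> C \<noteq> {} \<and> B \<subset> A \<and> C \<subset> A \<longrightarrow>
        (\<exists>\<gamma>\<in>S. supp X \<gamma> \<subseteq> A \<and> \<gamma> ` B \<subseteq> C))"

definition X_GU :: "'a topology \<Rightarrow> ('a \<Rightarrow> 'a) set \<Rightarrow> 'a set \<Rightarrow> ('a \<Rightarrow> 'a) set" where
  "X_GU X G U = {\<gamma> \<in> G. \<exists>V. clopenin X V \<and> V \<subset> U \<and> supp X \<gamma> \<subseteq> V}"

end

theory Submission
  imports Defs
begin

abbreviation P0 :: "(nat \<Rightarrow> bool) topology" where
  "P0 \<equiv> product_topology (\<lambda>_::nat. discrete_topology (UNIV::bool set)) UNIV"

lemma cyl_mem: "x \<in> (\<Pi>\<^sub>E i\<in>(UNIV::nat set). (if i \<in> F then {p i} else (UNIV::bool set))) \<longleftrightarrow> x \<in> \<Inter> (insert UNIV ((\<lambda>i. {f. f i = p i}) ` F))"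
proof -
  have "x \<in> (\<Pi>\<^sub>E i\<in>(UNIV::nat set). (if i \<in> F then {p i} else (UNIV::bool set))) \<longleftrightarrow> (\<forall>i\<in>F. x i = p i)"
    apply (simp only: PiE_UNIV_domain Pi_iff)
    apply (rule iffI)
    apply (metis UNIV_I singletonD)
    by simp
  then show ?thesis by auto
qed

lemma tP0: "topspace P0 = UNIV" by simp

lemma P0_clopen_base:
  assumes "openin P0 W" "p \<in> W"
  shows "\<exists>Q. openin P0 Q \<and> closedin P0 Q \<and> p \<in> Q \<and> Q \<subseteq> W"
proof -
  obtain Xs where Xs: "p \<in> (\<Pi>\<^sub>E i\<in>UNIV. Xs i)" "\<And>i. openin (discrete_topology UNIV) (Xs i)"
     "finite {i. Xs i \<noteq> topspace (discrete_topology (UNIV::bool set))}" "(\<Pi>\<^sub>E i\<in>UNIV. Xs i) \<subseteq> W"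
    using product_topology_open_contains_basis[OF assms] by blast
  define F where "F = {i. Xs i \<noteq> UNIV}"
  have fF: "finite F" using Xs(3) by (simp add: F_def)
  define Y where "Y = (\<lambda>i. if i \<in> F then {p i} else (UNIV::bool set))"
  define Q where "Q = (\<Pi>\<^sub>E i\<in>UNIV. Y i)"
  have Qeq: "Q = \<Inter> (insert UNIV ((\<lambda>i. {f. f i = p i}) ` F))"
    unfolding Q_def Y_def by (rule Set.set_eqI, rule cyl_mem)
  have "openin P0 Q" unfolding Q_def
    by (rule product_topology_basis) (auto simp: Y_def intro: finite_subset[OF _ fF])
  moreover have "closedin P0 Q" unfolding Qeq
  proof (rule closedin_Inter)
    fix S assume "S \<in> insert UNIV ((\<lambda>i. {f. f i = p i}) ` F)"
    then consider "S = UNIV" | i where "S = {f. f i = p i}" by blast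
    then show "closedin P0 S"
    proof cases
      case 1 then show ?thesis
        using closedin_topspace[of P0] tP0 by metis
    next
      case 2
      have "closedin P0 {x \<in> topspace P0. x i \<in> {p i}}"
        by (rule closedin_continuous_map_preimage[OF continuous_map_product_projection]) (simp_all)
      moreover have "{x \<in> topspace P0. x i \<in> {p i}} = {f. f i = p i}" by simp
      ultimately show ?thesis using 2 by metis
    qed
  qed simp
  moreover have "p \<in> Q" unfolding Q_def Y_def cyl_mem by blast
  moreover have "Q \<subseteq> W"
  proof -
    have "Q \<subseteq> (\<Pi>\<^sub>E i\<in>UNIV. Xs i)"
    proof
      fix x assume "x \<in> Q"
      then have xF: "\<forall>i\<in>F. x i = p i" unfolding Q_def Y_def cyl_mem by blast
      have "x i \<in> Xs i" for i
      proof (cases "i \<in> F")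
        case True
        then have "x i = p i" using xF by blast
        moreover have "p i \<in> Xs i" using Xs(1) by (simp add: PiE_UNIV_domain Pi_iff)
        ultimately show ?thesis by simp
      next
        case False then show ?thesis by (simp add: F_def)
      qed
      then show "x \<in> (\<Pi>\<^sub>E i\<in>UNIV. Xs i)" by (simp add: PiE_UNIV_domain Pi_iff)
    qed
    then show ?thesis using Xs(4) by blast
  qed
  ultimately show ?thesis by blast
qed

lemma P0_no_isolated:
  assumes "openin P0 W" "p \<in> W"
  shows "\<exists>p'\<in>W. p' \<noteq> p"
proof -
  obtain Xs where Xs: "p \<in> (\<Pi>\<^sub>E i\<in>UNIV. Xs i)" "\<And>i. openin (discrete_topology UNIV) (Xs i)"
     "finite {i. Xs i \<noteq> topspace (discrete_topology (UNIV::bool set))}" "(\<Pi>\<^sub>E i\<in>UNIV. Xs i) \<subseteq> W"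
    using product_topology_open_contains_basis[OF assms] by blast
  have "finite {i. Xs i \<noteq> UNIV}" using Xs(3) by simp
  then obtain j where j: "Xs j = UNIV" using ex_new_if_finite[OF infinite_UNIV_nat] by blast
  define p' where "p' = p(j := \<not> p j)"
  have "p' \<in> (\<Pi>\<^sub>E i\<in>UNIV. Xs i)" using Xs(1) j by (auto simp: p'_def PiE_iff)
  moreover have "p' \<noteq> p" by (auto simp: p'_def fun_eq_iff)
  ultimately show ?thesis using Xs(4) by blast
qed


lemma cantor_maps:
  assumes "cantor_space X"
  obtains f g where "homeomorphic_maps X P0 f g"
proof -
  have "X homeomorphic_space P0" using assms by (simp only: cantor_space_def)
  then show ?thesis unfolding homeomorphic_space_def by (elim exE) (rule that)
qed

lemma cantor_clopen_base:
  assumes "cantor_space X" "openin X W" "p \<in> W"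
  shows "\<exists>Q. clopenin X Q \<and> p \<in> Q \<and> Q \<subseteq> W"
proof -
  obtain f g where fg: "homeomorphic_maps X P0 f g" using cantor_maps[OF assms(1)] by blast
  then have hf: "homeomorphic_map X P0 f" and gf: "\<And>x. x \<in> topspace X \<Longrightarrow> g (f x) = x"
    by (auto simp: homeomorphic_maps_map)
  have WT: "W \<subseteq> topspace X" using assms(2) by (rule openin_subset)
  have oW: "openin P0 (f ` W)" using homeomorphic_map_openness[OF hf WT] assms(2) by blast
  have fpW: "f p \<in> f ` W" using assms(3) by (rule imageI)
  from P0_clopen_base[OF oW fpW] obtain Q0 where Q0: "openin P0 Q0" "closedin P0 Q0" "f p \<in> Q0" "Q0 \<subseteq> f ` W"
    by blast
  have cf: "continuous_map X P0 f" using hf by (rule homeomorphic_imp_continuous_map)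
  define Q where "Q = {x \<in> topspace X. f x \<in> Q0}"
  have "openin X Q" unfolding Q_def by (rule openin_continuous_map_preimage[OF cf Q0(1)])
  moreover have "closedin X Q" unfolding Q_def by (rule closedin_continuous_map_preimage[OF cf Q0(2)])
  moreover have "p \<in> Q" using Q0(3) assms(3) WT unfolding Q_def by blast
  moreover have "Q \<subseteq> W"
  proof
    fix x assume "x \<in> Q"
    then have x: "x \<in> topspace X" "f x \<in> f ` W" using Q0(4) by (auto simp: Q_def)
    then obtain w where w: "w \<in> W" "f x = f w" by blast
    then have "g (f x) = g (f w)" by simp
    then show "x \<in> W" using gf[OF x(1)] gf[of w] w WT by (metis subsetD)
  qed
  ultimately show ?thesis unfolding clopenin_def by blast
qed

lemma cantor_no_isolated:
  assumes "cantor_space X" "openin X W" "p \<in> W"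
  shows "\<exists>p'\<in>W. p' \<noteq> p"
proof -
  obtain f g where fg: "homeomorphic_maps X P0 f g" using cantor_maps[OF assms(1)] by blast
  then have hf: "homeomorphic_map X P0 f"
    by (auto simp: homeomorphic_maps_map)
  have WT: "W \<subseteq> topspace X" using assms(2) by (rule openin_subset)
  have oW: "openin P0 (f ` W)" using homeomorphic_map_openness[OF hf WT] assms(2) by blast
  have fpW: "f p \<in> f ` W" using assms(3) by (rule imageI)
  from P0_no_isolated[OF oW fpW] obtain y where "y \<in> f ` W" "y \<noteq> f p"
    by blast
  then obtain w where w: "w \<in> W" "y = f w" by blast
  then have "w \<noteq> p" using \<open>y \<noteq> f p\<close> by metis
  then show ?thesis using w(1) by metis
qed

lemma cantor_closed_singleton:
  assumes "cantor_space X" "p \<in> topspace X"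
  shows "closedin X {p}"
proof -
  have H0: "Hausdorff_space P0"
    unfolding Hausdorff_space_product_topology by (rule disjI2) simp
  have hs: "X homeomorphic_space P0" using assms(1) by (simp only: cantor_space_def)
  have "Hausdorff_space X"
    using iffD2[OF homeomorphic_Hausdorff_space[OF hs] H0] .
  then have "t1_space X" by (rule Hausdorff_imp_t1_space)
  then have "\<forall>x \<in> topspace X. closedin X {x}" by (simp only: t1_space_closedin_singleton)
  then show ?thesis using assms(2) by (rule bspec)
qed



lemma hg_simps [simp]:
  "carrier (homeo_group X) = Homeo X"
  "a \<otimes>\<^bsub>homeo_group X\<^esub> b = b \<circ> a"
  "\<one>\<^bsub>homeo_group X\<^esub> = id"
  by (simp_all add: homeo_group_def)

lemma Homeo_fix: "k \<in> Homeo X \<Longrightarrow> x \<notin> topspace X \<Longrightarrow> k x = x"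
  by (simp add: Homeo_def)

lemma Homeo_T: "k \<in> Homeo X \<Longrightarrow> x \<in> topspace X \<Longrightarrow> k x \<in> topspace X"
  unfolding Homeo_def homeomorphic_eq_everything_map by blast

lemma Homeo_comp: "a \<in> Homeo X \<Longrightarrow> b \<in> Homeo X \<Longrightarrow> b \<circ> a \<in> Homeo X"
  unfolding Homeo_def using homeomorphic_map_compose by fastforce

lemma Homeo_id: "id \<in> Homeo X"
  by (simp add: Homeo_def)

lemma Homeo_inv_ex:
  assumes "k \<in> Homeo X" shows "\<exists>h \<in> Homeo X. k \<circ> h = id"
proof -
  have hk: "homeomorphic_map X X k" using assms by (simp add: Homeo_def)
  then obtain k' where kk: "homeomorphic_maps X X k k'" by (auto simp: homeomorphic_map_maps)
  then have hk': "homeomorphic_map X X k'" and kk': "\<And>y. y \<in> topspace X \<Longrightarrow> k (k' y) = y"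
    by (auto simp: homeomorphic_maps_map)
  define h where "h = (\<lambda>x. if x \<in> topspace X then k' x else x)"
  have "homeomorphic_map X X h"
    by (rule homeomorphic_map_eq[OF hk']) (simp add: h_def)
  then have "h \<in> Homeo X" by (simp add: Homeo_def h_def)
  moreover have "k \<circ> h = id"
    by (rule ext) (simp add: h_def kk' Homeo_fix[OF assms])
  ultimately show ?thesis by blast
qed

lemma homeo_group_group: "group (homeo_group X)"
proof (rule groupI)
  fix x y assume "x \<in> carrier (homeo_group X)" "y \<in> carrier (homeo_group X)"
  then show "x \<otimes>\<^bsub>homeo_group X\<^esub> y \<in> carrier (homeo_group X)" by (simp add: Homeo_comp)
next
  show "\<one>\<^bsub>homeo_group X\<^esub> \<in> carrier (homeo_group X)" by (simp add: Homeo_id)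
next
  fix x y z show "x \<otimes>\<^bsub>homeo_group X\<^esub> y \<otimes>\<^bsub>homeo_group X\<^esub> z =
      x \<otimes>\<^bsub>homeo_group X\<^esub> (y \<otimes>\<^bsub>homeo_group X\<^esub> z)" by (simp add: comp_assoc)
next
  fix x show "\<one>\<^bsub>homeo_group X\<^esub> \<otimes>\<^bsub>homeo_group X\<^esub> x = x" by simp
next
  fix x assume "x \<in> carrier (homeo_group X)"
  then show "\<exists>y\<in>carrier (homeo_group X). y \<otimes>\<^bsub>homeo_group X\<^esub> x = \<one>\<^bsub>homeo_group X\<^esub>"
    using Homeo_inv_ex[of x X] by simp
qed

lemma hg_inv:
  assumes "k \<in> Homeo X"
  shows "inv\<^bsub>homeo_group X\<^esub> k \<in> Homeo X" "\<And>x. k ((inv\<^bsub>homeo_group X\<^esub> k) x) = x"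
    "\<And>x. (inv\<^bsub>homeo_group X\<^esub> k) (k x) = x"
proof -
  interpret grp: group "homeo_group X" by (rule homeo_group_group)
  have kc: "k \<in> carrier (homeo_group X)" using assms by simp
  show "inv\<^bsub>homeo_group X\<^esub> k \<in> Homeo X" using grp.inv_closed[OF kc] by simp
  have "k \<circ> inv\<^bsub>homeo_group X\<^esub> k = id" using grp.l_inv[OF kc] by simp
  then show "\<And>x. k ((inv\<^bsub>homeo_group X\<^esub> k) x) = x" by (metis comp_apply id_apply)
  have "inv\<^bsub>homeo_group X\<^esub> k \<circ> k = id" using grp.r_inv[OF kc] by simp
  then show "\<And>x. (inv\<^bsub>homeo_group X\<^esub> k) (k x) = x" by (metis comp_apply id_apply)
qed



lemma clopen_diff: "clopenin X A \<Longrightarrow> clopenin X B \<Longrightarrow> clopenin X (A - B)"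
  unfolding clopenin_def by (auto intro: openin_diff closedin_diff)

lemma clopen_Un: "clopenin X A \<Longrightarrow> clopenin X B \<Longrightarrow> clopenin X (A \<union> B)"
  unfolding clopenin_def by auto

lemma clopen_top: "clopenin X (topspace X)"
  unfolding clopenin_def by auto

lemma clopen_image:
  assumes "k \<in> Homeo X" "clopenin X Q" shows "clopenin X (k ` Q)"
proof -
  have hk: "homeomorphic_map X X k" using assms(1) by (simp add: Homeo_def)
  have QT: "Q \<subseteq> topspace X" using assms(2) unfolding clopenin_def by (simp add: openin_subset)
  show ?thesis using assms(2) homeomorphic_map_openness[OF hk QT] homeomorphic_map_closedness[OF hk QT]
    unfolding clopenin_def by simp
qed

theorem lemma2p7:
  fixes X :: "'a topology" and G :: "('a \<Rightarrow> 'a) set" and U :: "'a set"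
  assumes "cantor_space X"
    and "subgroup G (homeo_group X)"
    and "vigorous X G"
    and "U \<in> K_sets X"
  shows "generate (homeo_group X) (X_GU X G U) = pstab X G (topspace X - U)"
proof -
  interpret grp: group "homeo_group X" by (rule homeo_group_group)
  interpret sg: subgroup G "homeo_group X" by (rule assms(2))
  define T where "T = topspace X"
  have cU: "clopenin X U" and Une: "U \<noteq> {}" and UT: "U \<subset> T"
    using assms(4) by (auto simp: K_sets_def T_def)
  have GH: "\<And>k. k \<in> G \<Longrightarrow> k \<in> Homeo X" using sg.subset by auto
  have Gm: "\<And>a b. a \<in> G \<Longrightarrow> b \<in> G \<Longrightarrow> b \<circ> a \<in> G"
    using sg.m_closed by fastforce
  have Ginv: "\<And>a. a \<in> G \<Longrightarrow> inv\<^bsub>homeo_group X\<^esub> a \<in> G"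
    using sg.m_inv_closed by blast
  define P where "P = pstab X G (T - U)"
  have SP: "X_GU X G U \<subseteq> P"
  proof
    fix k assume "k \<in> X_GU X G U"
    then obtain V where k: "k \<in> G" "V \<subset> U" "supp X k \<subseteq> V" by (auto simp: X_GU_def)
    have "k p = p" if "p \<in> T - U" for p
    proof (rule ccontr)
      assume "k p \<noteq> p"
      then have "p \<in> supp X k" using that by (simp add: supp_def T_def)
      then show False using k that by blast
    qed
    then show "k \<in> P" using k by (simp add: P_def pstab_def)
  qed
  have subP: "subgroup P (homeo_group X)"
  proof
    show "P \<subseteq> carrier (homeo_group X)" using GH by (auto simp: P_def pstab_def)
  next
    fix a b assume "a \<in> P" "b \<in> P"
    then show "a \<otimes>\<^bsub>homeo_group X\<^esub> b \<in> P" using Gm by (auto simp: P_def pstab_def)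
  next
    show "\<one>\<^bsub>homeo_group X\<^esub> \<in> P" using sg.one_closed by (auto simp: P_def pstab_def)
  next
    fix a assume a: "a \<in> P"
    then have aG: "a \<in> G" and af: "\<And>p. p \<in> T - U \<Longrightarrow> a p = p" by (auto simp: P_def pstab_def)
    have "(inv\<^bsub>homeo_group X\<^esub> a) p = p" if "p \<in> T - U" for p
      using hg_inv(3)[OF GH[OF aG], of p] af[OF that] by simp
    then show "inv\<^bsub>homeo_group X\<^esub> a \<in> P" using Ginv[OF aG] by (auto simp: P_def pstab_def)
  qed
  have "generate (homeo_group X) (X_GU X G U) \<subseteq> P"
    by (rule grp.generate_subgroup_incl[OF SP subP])
  moreover have "P \<subseteq> generate (homeo_group X) (X_GU X G U)"
  proof
    fix g assume gP: "g \<in> P"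
    then have gG: "g \<in> G" and gfix: "\<And>p. p \<in> T - U \<Longrightarrow> g p = p" by (auto simp: P_def pstab_def)
    have gH: "g \<in> Homeo X" using GH[OF gG] .
    define gi where "gi = inv\<^bsub>homeo_group X\<^esub> g"
    have giH: "gi \<in> Homeo X" and ggi: "\<And>y. g (gi y) = y" and gig: "\<And>y. gi (g y) = y"
      using hg_inv[OF gH] by (simp_all add: gi_def)
    have UT': "U \<subseteq> T" using UT by blast
    have gU: "g p \<in> U" if "p \<in> U" for p
    proof (rule ccontr)
      assume "g p \<notin> U"
      moreover have "g p \<in> T" using Homeo_T[OF gH] that UT' by (auto simp: T_def)
      ultimately have "g (g p) = g p" using gfix by blast
      then have "gi (g (g p)) = gi (g p)" by simp
      then have "g p = p" using gig by simp
      then show False using that \<open>g p \<notin> U\<close> by simp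
    qed
    have oU: "openin X U" using cU by (simp add: clopenin_def)
    obtain p0 where p0: "p0 \<in> U" using Une by blast
    have sing: "\<And>y. y \<in> T \<Longrightarrow> closedin X {y}"
      using cantor_closed_singleton[OF assms(1)] by (simp add: T_def)
    have "\<exists>qq\<in>U. qq \<noteq> p0 \<and> qq \<noteq> g p0"
    proof -
      obtain y1 where y1: "y1 \<in> U" "y1 \<noteq> p0" using cantor_no_isolated[OF assms(1) oU p0] by blast
      show ?thesis
      proof (cases "y1 = g p0")
        case False then show ?thesis using y1 by blast
      next
        case True
        have "openin X (U - {p0})" using oU sing[of p0] p0 UT' by (auto intro: openin_diff)
        moreover have "y1 \<in> U - {p0}" using y1 by blast
        ultimately obtain y2 where "y2 \<in> U - {p0}" "y2 \<noteq> y1"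
          using cantor_no_isolated[OF assms(1)] by blast
        then show ?thesis using True by blast
      qed
    qed
    then obtain qq where qq: "qq \<in> U" "qq \<noteq> p0" "qq \<noteq> g p0" by blast
    define r where "r = gi qq"
    have rT: "r \<in> T" using Homeo_T[OF giH] qq(1) UT' by (auto simp: r_def T_def)
    have rp0: "r \<noteq> p0" using qq(3) ggi by (auto simp: r_def)
    have qqT: "qq \<in> T" using qq(1) UT' by blast
    have "closedin X ({qq} \<union> {r})" by (rule closedin_Un[OF sing[OF qqT] sing[OF rT]])
    then have "openin X (U - ({qq} \<union> {r}))" using oU by (auto intro: openin_diff)
    moreover have "p0 \<in> U - ({qq} \<union> {r})" using p0 qq rp0 by auto
    ultimately obtain Q where Q: "clopenin X Q" "p0 \<in> Q" "Q \<subseteq> U - ({qq} \<union> {r})"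
      using cantor_clopen_base[OF assms(1)] by blast
    have oQ: "openin X Q" using Q(1) by (simp add: clopenin_def)
    obtain p1 where p1: "p1 \<in> Q" "p1 \<noteq> p0" using cantor_no_isolated[OF assms(1) oQ Q(2)] by blast
    have "openin X (Q - {p1})" using oQ sing[of p1] p1 Q(3) UT' by (auto intro: openin_diff)
    moreover have "p0 \<in> Q - {p1}" using Q(2) p1 by auto
    ultimately obtain Q' where Q': "clopenin X Q'" "p0 \<in> Q'" "Q' \<subseteq> Q - {p1}"
      using cantor_clopen_base[OF assms(1)] by blast
    define E where "E = T - U"
    have cE: "clopenin X E" unfolding E_def T_def by (rule clopen_diff[OF clopen_top cU])
    obtain e where e: "e \<in> E" using UT by (auto simp: E_def)
    define A where "A = Q \<union> E"
    have cA: "clopenin X A" unfolding A_def by (rule clopen_Un[OF Q(1) cE])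
    have eQ: "e \<notin> Q" using e Q(3) by (auto simp: E_def)
    have QA: "Q \<subset> A" using e eQ by (auto simp: A_def)
    have Q'A: "Q' \<subset> A" using e eQ Q'(3) by (auto simp: A_def)
    have vig: "\<forall>A B C. clopenin X A \<and> clopenin X B \<and> clopenin X C \<and>
        B \<noteq> {} \<and> C \<noteq> {} \<and> B \<subset> A \<and> C \<subset> A \<longrightarrow>
        (\<exists>\<gamma>\<in>G. supp X \<gamma> \<subseteq> A \<and> \<gamma> ` B \<subseteq> C)"
      using assms(3) by (simp only: vigorous_def)
    have "clopenin X A \<and> clopenin X Q \<and> clopenin X Q' \<and>
        Q \<noteq> {} \<and> Q' \<noteq> {} \<and> Q \<subset> A \<and> Q' \<subset> A"
      using cA Q(1) Q'(1) Q(2) Q'(2) QA Q'A by blast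
    then have "\<exists>\<gamma>\<in>G. supp X \<gamma> \<subseteq> A \<and> \<gamma> ` Q \<subseteq> Q'"
      using spec[OF spec[OF spec[OF vig, of A], of Q], of Q'] by (rule mp[rotated])
    then obtain x where x: "x \<in> G" "supp X x \<subseteq> A" "x ` Q \<subseteq> Q'"
      by blast
    have xH: "x \<in> Homeo X" using GH[OF x(1)] .
    have xfix: "x q = q" if "q \<notin> A" for q
    proof (cases "q \<in> T")
      case True
      show ?thesis
      proof (rule ccontr)
        assume "x q \<noteq> q"
        then have "q \<in> supp X x" using True by (simp add: supp_def T_def)
        then show False using x(2) that by blast
      qed
    next
      case False then show ?thesis using Homeo_fix[OF xH] by (simp add: T_def)
    qed
    define xi where "xi = inv\<^bsub>homeo_group X\<^esub> x"
    have xiH: "xi \<in> Homeo X" and xxi: "\<And>y. x (xi y) = y" and xix: "\<And>y. xi (x y) = y"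
      using hg_inv[OF xH] by (simp_all add: xi_def)
    have xiG: "xi \<in> G" using Ginv[OF x(1)] by (simp add: xi_def)
    define a where "a = x \<circ> (g \<circ> xi)"
    have aG: "a \<in> G" unfolding a_def by (rule Gm[OF Gm[OF xiG gG] x(1)])
    define V where "V = (U - Q) \<union> Q'"
    have cV: "clopenin X V" unfolding V_def by (rule clopen_Un[OF clopen_diff[OF cU Q(1)] Q'(1)])
    have VU: "V \<subset> U" using Q(3) Q'(3) p1 by (auto simp: V_def)
    have suppa: "supp X a \<subseteq> V"
    proof
      fix p assume "p \<in> supp X a"
      then have pT: "p \<in> T" and ap: "a p \<noteq> p" by (auto simp: supp_def T_def)
      show "p \<in> V"
      proof (rule ccontr)
        assume pV: "p \<notin> V"
        define q where "q = xi p"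
        have qT: "q \<in> T" using Homeo_T[OF xiH] pT by (simp add: q_def T_def)
        have xq: "x q = p" by (simp add: q_def xxi)
        have "q \<notin> U"
        proof
          assume qU: "q \<in> U"
          show False
          proof (cases "q \<in> Q")
            case True
            then have "x q \<in> Q'" using x(3) by blast
            then show False using xq pV by (simp add: V_def)
          next
            case False
            then have "q \<notin> A" using qU by (simp add: A_def E_def)
            then have "x q = q" by (rule xfix)
            then show False using xq pV qU False by (simp add: V_def)
          qed
        qed
        then have "g q = q" using gfix qT by blast
        then have "a p = p" using xq by (simp add: a_def q_def)
        then show False using ap by simp
      qed
    qed
    have aS: "a \<in> X_GU X G U" using aG cV VU suppa by (auto simp: X_GU_def)
    have agree: "a y = g y" if "y \<in> T" "y \<notin> Q" "g y \<notin> Q" for y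
    proof (cases "y \<in> U")
      case True
      then have "y \<notin> A" using that(2) by (simp add: A_def E_def)
      then have "x y = y" by (rule xfix)
      then have xiy: "xi y = y" using xix[of y] by simp
      have "g y \<in> U" using gU[OF True] .
      then have "g y \<notin> A" using that(3) by (simp add: A_def E_def)
      then have "x (g y) = g y" by (rule xfix)
      then show ?thesis by (simp add: a_def xiy)
    next
      case False
      then have "y \<notin> supp X a" using suppa VU by blast
      then have "a y = y" using that(1) by (simp add: supp_def T_def)
      moreover have "g y = y" using gfix that(1) False by blast
      ultimately show ?thesis by simp
    qed
    define ai where "ai = inv\<^bsub>homeo_group X\<^esub> a"
    have aiG: "ai \<in> G" using Ginv[OF aG] by (simp add: ai_def)
    have aia: "\<And>y. ai (a y) = y"
      using hg_inv[OF GH[OF aG]] by (simp_all add: ai_def)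
    define b where "b = g \<circ> ai"
    have bG: "b \<in> G" unfolding b_def by (rule Gm[OF aiG gG])
    define W where "W = Q \<union> g ` Q"
    have cW: "clopenin X W" unfolding W_def by (rule clopen_Un[OF Q(1) clopen_image[OF gH Q(1)]])
    have qqW: "qq \<notin> W"
    proof
      assume "qq \<in> W"
      then consider "qq \<in> Q" | y where "y \<in> Q" "qq = g y" by (auto simp: W_def)
      then show False
      proof cases
        case 1 then show False using Q(3) by blast
      next
        case 2
        then have "y = r" using gig[of y] by (simp add: r_def)
        then show False using 2 Q(3) by blast
      qed
    qed
    have WU: "W \<subset> U" using Q(3) gU qq(1) qqW by (auto simp: W_def)
    have suppb: "supp X b \<subseteq> W"
    proof
      fix p assume "p \<in> supp X b"
      then have pT: "p \<in> T" and bp: "b p \<noteq> p" by (auto simp: supp_def T_def)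
      show "p \<in> W"
      proof (rule ccontr)
        assume pW: "p \<notin> W"
        define y where "y = gi p"
        have yT: "y \<in> T" using Homeo_T[OF giH] pT by (simp add: y_def T_def)
        have gy: "g y = p" by (simp add: y_def ggi)
        have yQ: "y \<notin> Q" using pW gy by (auto simp: W_def)
        have gyQ: "g y \<notin> Q" using pW gy by (auto simp: W_def)
        have "a y = p" using agree[OF yT yQ gyQ] gy by simp
        then have "ai p = y" using aia[of y] by simp
        then have "b p = p" using gy by (simp add: b_def)
        then show False using bp by simp
      qed
    qed
    have bS: "b \<in> X_GU X G U" using bG cW WU suppb by (auto simp: X_GU_def)
    have "a \<otimes>\<^bsub>homeo_group X\<^esub> b \<in> generate (homeo_group X) (X_GU X G U)"
      by (rule generate.eng[OF generate.incl[OF aS] generate.incl[OF bS]])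
    moreover have "a \<otimes>\<^bsub>homeo_group X\<^esub> b = g"
      by (rule ext) (simp add: b_def aia)
    ultimately show "g \<in> generate (homeo_group X) (X_GU X G U)" by simp
  qed
  ultimately show ?thesis by (simp add: P_def T_def)
qed

end
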